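(* Let $p$ be an odd prime, $q\in\mathbb{C}_p$ with $|q-1|_p<1$, $\alpha\in\mathbb{N}\cup\{0\}$, $h\in\mathbb{N}$. For every integer $n\ge0$, \[ \int_{\mathbb{Z}_p}q^{(h-1)(\xi+1)}[1-\xi]_{q^{-\alpha}}^n\,d\mu_{-q}(\xi)=\frac{\widetilde{G}_{n+1,q^{-1}}^{(\alpha,h)}(2)}{n+1}. \]
   Context: For $x\in\mathbb{Z}_p$ write $[x]_q=\frac{1-q^x}{1-q}$. For a uniformly differentiable $f:\mathbb{Z}_p\to\mathbb{C}_p$, the fermionic $p$-adic $q$-integral is $\int_{\mathbb{Z}_p}f(\xi)\,d\mu_{-q}(\xi)=\lim_{N\to\infty}\frac{1}{[p^N]_{-q}}\sum_{\xi=0}^{p^N-1}f(\xi)(-q)^{\xi}$, with $[p^N]_{-q}=\frac{1+q^{p^N}}{1+q}$. The $(h,q)$-Genocchi polynomials with weight $\alpha$ are defined for $n\ge0$, $x\in\mathbb{Z}_p$ by $\frac{\widetilde{G}_{n+1,q}^{(\alpha,h)}(x)}{n+1}=\int_{\mathbb{Z}_p}q^{(h-1)\xi}[x+\xi]_{q^{\alpha}}^n\,d\mu_{-q}(\xi)$. The version with $q^{-1}$ is obtained by replacing $q$ by $q^{-1}$ everywhere: $\frac{\widetilde{G}_{n+1,q^{-1}}^{(\alpha,h)}(x)}{n+1}=\int_{\mathbb{Z}_p}q^{(1-h)\xi}[x+\xi]_{q^{-\alpha}}^n\,d\mu_{-q^{-1}}(\xi)$. *)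

theory Defs
  imports "HOL-Computational_Algebra.Computational_Algebra"
begin

definition padic_val_rat :: "nat \<Rightarrow> rat \<Rightarrow> int" where
  "padic_val_rat p r = (case quotient_of r of (a, b) \<Rightarrow>
      int (multiplicity (int p) a) - int (multiplicity (int p) b))"

definition padic_abs_rat :: "nat \<Rightarrow> rat \<Rightarrow> real" where
  "padic_abs_rat p r = (if r = 0 then 0 else real p powr (- real_of_int (padic_val_rat p r)))"

definition conv_abs :: "('a::field \<Rightarrow> real) \<Rightarrow> (nat \<Rightarrow> 'a) \<Rightarrow> 'a \<Rightarrow> bool" where
  "conv_abs absv s L \<longleftrightarrow> (\<forall>e>0. \<exists>M. \<forall>N\<ge>M. absv (s N - L) < e)"

definition algebraic_over_Q :: "'a::field_char_0 \<Rightarrow> bool" where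
  "algebraic_over_Q x \<longleftrightarrow> (\<exists>P :: rat poly. P \<noteq> 0 \<and> poly (map_poly of_rat P) x = 0)"

text \<open>Up to isometric isomorphism this is exactly (C_p, |.|_p).\<close>
definition Cp_field :: "('a::field_char_0 \<Rightarrow> real) \<Rightarrow> nat \<Rightarrow> bool" where
  "Cp_field absv p \<longleftrightarrow>
     (\<forall>x. absv x \<ge> 0) \<and> (\<forall>x. absv x = 0 \<longleftrightarrow> x = 0) \<and>
     (\<forall>x y. absv (x * y) = absv x * absv y) \<and>
     (\<forall>x y. absv (x + y) \<le> max (absv x) (absv y)) \<and>
     (\<forall>r. absv (of_rat r) = padic_abs_rat p r) \<and>
     (\<forall>s. (\<forall>e>0. \<exists>M. \<forall>m\<ge>M. \<forall>k\<ge>M. absv (s m - s k) < e) \<longrightarrow> (\<exists>L. conv_abs absv s L)) \<and>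
     (\<forall>P :: 'a poly. degree P > 0 \<longrightarrow> (\<exists>x. poly P x = 0)) \<and>
     (\<forall>x e. e > 0 \<longrightarrow> (\<exists>y. algebraic_over_Q y \<and> absv (x - y) < e))"

definition qbr :: "'a::field \<Rightarrow> int \<Rightarrow> 'a" where
  "qbr Q x = (if Q = 1 then of_int x else (1 - Q powi x) / (1 - Q))"

text \<open>Fermionic p-adic q-integral; f is given by its values on the natural numbers,
  which are the only values entering the defining Riemann sums.\<close>
definition fermionic_qint :: "('a::field_char_0 \<Rightarrow> real) \<Rightarrow> nat \<Rightarrow> 'a \<Rightarrow> (nat \<Rightarrow> 'a) \<Rightarrow> 'a" where
  "fermionic_qint absv p q f = (THE L. conv_abs absv
      (\<lambda>N. (1 / qbr (- q) (int (p ^ N))) * (\<Sum>\<xi><p ^ N. f \<xi> * (- q) ^ \<xi>)) L)"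

text \<open>Gtilde absv p Q alpha h m x = \<open>G~_{m,Q}^{(alpha,h)}(x)\<close> for m \<ge> 1, i.e.
  G~_{n+1,Q}(x) = (n+1) * int q^((h-1) xi) [x+xi]_{Q^alpha}^n d mu_{-Q}(xi).
  The q^{-1}-version is obtained by taking Q = inverse q.\<close>
definition Gtilde :: "('a::field_char_0 \<Rightarrow> real) \<Rightarrow> nat \<Rightarrow> 'a \<Rightarrow> nat \<Rightarrow> nat \<Rightarrow> nat \<Rightarrow> int \<Rightarrow> 'a" where
  "Gtilde absv p Q \<alpha> h m x = of_nat m *
     fermionic_qint absv p Q (\<lambda>\<xi>. Q ^ ((h - 1) * \<xi>) * qbr (Q ^ \<alpha>) (x + int \<xi>) ^ (m - 1))"

end

theory Submission
  imports Defs
begin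



locale cpf =
  fixes absv :: "'a::field_char_0 \<Rightarrow> real" and p :: nat
  assumes Cp: "Cp_field absv p" and pp: "prime p"
begin

lemma av_nonneg: "absv x \<ge> 0" using Cp unfolding Cp_field_def by blast
lemma av_zero: "absv x = 0 \<longleftrightarrow> x = 0" using Cp unfolding Cp_field_def by blast
lemma av_mult: "absv (x * y) = absv x * absv y" using Cp unfolding Cp_field_def by blast
lemma av_ultra: "absv (x + y) \<le> max (absv x) (absv y)" using Cp unfolding Cp_field_def by blast
lemma av_rat: "absv (of_rat r) = padic_abs_rat p r" using Cp unfolding Cp_field_def by blast

lemma av_one: "absv 1 = 1"
proof -
  have "absv 1 = absv 1 * absv 1" using av_mult[of 1 1] by simp
  moreover have "absv 1 \<noteq> 0" using av_zero by simp
  ultimately show ?thesis by simp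
qed

lemma av_minus: "absv (- x) = absv x"
proof -
  have "absv (-1) * absv (-1) = 1" using av_mult[of "-1" "-1"] av_one by simp
  hence "absv (-1) = 1" using av_nonneg[of "-1"]
    unfolding square_eq_1_iff by auto
  thus ?thesis using av_mult[of "-1" x] by simp
qed

lemma av_sym: "absv (x - y) = absv (y - x)"
  using av_minus[of "x - y"] by simp

lemma av_ultra_diff: "absv (x - y) \<le> max (absv x) (absv y)"
  using av_ultra[of x "-y"] av_minus[of y] by simp

lemma av_tri: "absv (x - z) \<le> max (absv (x - y)) (absv (y - z))"
  using av_ultra[of "x - y" "y - z"] by simp

lemma av_inverse: "absv (inverse x) = inverse (absv x)"
proof (cases "x = 0")
  case False
  then have "absv x * absv (inverse x) = 1" using av_mult[of x "inverse x"] av_one by simp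
  then show ?thesis by (metis inverse_unique)
qed (use av_zero[of 0] in simp)

lemma av_divide: "absv (x / y) = absv x / absv y"
  by (simp add: divide_inverse av_mult av_inverse)

lemma av_power: "absv (x ^ n) = absv x ^ n"
  by (induction n) (simp_all add: av_one av_mult)

lemma av_strict: assumes "absv y < absv x" shows "absv (x + y) = absv x"
proof -
  have "absv (x + y) \<le> absv x" using av_ultra[of x y] assms by simp
  moreover have "absv x \<le> max (absv (x + y)) (absv y)"
    using av_ultra_diff[of "x + y" y] by simp
  ultimately show ?thesis using assms by linarith
qed

lemma av_of_nat: "absv (of_nat n) \<le> 1"
proof (induction n)
  case 0 then show ?case using av_zero[of 0] by simp
next
  case (Suc n)
  then show ?case using av_ultra[of 1 "of_nat n"] av_one by simp
qed

lemma av_of_int: "absv (of_int k) \<le> 1"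
  by (metis av_minus av_of_nat int_cases2 of_int_minus of_int_of_nat_eq)

lemma av_p: "absv (of_nat p) = 1 / real p"
proof -
  have "absv (of_nat p) = absv (of_rat (of_nat p))" by simp
  also have "\<dots> = padic_abs_rat p (of_nat p)" by (rule av_rat)
  also have "\<dots> = 1 / real p"
  proof -
    have p0: "p \<noteq> 0" "p > 1" using pp prime_gt_1_nat by auto
    have "multiplicity (int p) (int p) = 1"
      using pp by (intro multiplicity_self) (auto simp: prime_gt_1_nat)
    then have "padic_val_rat p (of_nat p) = 1" by (simp add: padic_val_rat_def)
    then show ?thesis using p0 by (simp add: padic_abs_rat_def powr_minus_divide)
  qed
  finally show ?thesis .
qed


lemma p_gt1: "real p > 1" using pp prime_gt_1_nat by simp
lemma p_inv_lt1: "1 / real p < 1" using p_gt1 by simp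

lemma av_pow_diff:
  assumes "absv x \<le> 1" "absv y \<le> 1"
  shows "absv (x ^ m - y ^ m) \<le> absv (x - y)"
proof (induction m)
  case 0 then show ?case using av_zero[of 0] av_nonneg by simp
next
  case (Suc m)
  have e: "x ^ Suc m - y ^ Suc m = x * (x ^ m - y ^ m) + y ^ m * (x - y)"
    by (simp add: algebra_simps)
  have a1: "absv (x * (x ^ m - y ^ m)) \<le> absv (x - y)"
    using Suc assms av_nonneg[of "x ^ m - y ^ m"] unfolding av_mult
    by (meson mult_left_le_one_le order_trans av_nonneg)
  have "absv (y ^ m) \<le> 1" using assms av_nonneg[of y] by (simp add: av_power power_le_one)
  then have a2: "absv (y ^ m * (x - y)) \<le> absv (x - y)"
    unfolding av_mult using av_nonneg[of "x - y"] av_nonneg[of "y^m"] by (simp add: mult_left_le_one_le)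
  show ?case unfolding e using av_ultra[of "x * (x ^ m - y ^ m)" "y ^ m * (x - y)"] a1 a2 by simp
qed

lemma av_prod_diff:
  "absv (x1 * y1 - x2 * y2) \<le> max (absv (x1 - x2) * absv y1) (absv x2 * absv (y1 - y2))"
proof -
  have "x1 * y1 - x2 * y2 = (x1 - x2) * y1 + x2 * (y1 - y2)" by (simp add: algebra_simps)
  then show ?thesis using av_ultra[of "(x1 - x2) * y1" "x2 * (y1 - y2)"] by (simp add: av_mult)
qed

lemma av_sum_le:
  assumes "finite S" "\<And>i. i \<in> S \<Longrightarrow> absv (f i) \<le> B" "B \<ge> 0"
  shows "absv (sum f S) \<le> B"
  using assms
proof (induction S rule: finite_induct)
  case empty then show ?case using av_zero[of 0] by simp
next
  case (insert x F)
  have "absv (f x) \<le> B" "absv (sum f F) \<le> B" using insert by auto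
  then show ?case using av_ultra[of "f x" "sum f F"] insert(1,2) by (simp add: order_trans)
qed

lemma av_near1: assumes "absv (x - 1) < 1" shows "absv x = 1"
  using av_strict[of "x - 1" 1] assms av_one by simp

lemma av_powi1: assumes "absv x = 1" shows "absv (x powi j) = 1"
  using assms by (simp add: power_int_def av_power av_inverse)

lemma av_pow_sub1: assumes "absv x \<le> 1" shows "absv (x ^ m - 1) \<le> absv (x - 1)"
  using av_pow_diff[of x 1 m] assms av_one by simp

lemma av_powp:
  assumes "absv (x - 1) < 1"
  shows "absv (x ^ p - 1) \<le> max (1 / real p) (absv (x - 1)) * absv (x - 1)"
proof -
  have x1: "absv x = 1" using av_near1 assms by simp
  have "x ^ p - 1 = (x - 1) * (\<Sum>i<p. x ^ i)" by (rule power_diff_1_eq)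
  also have "(\<Sum>i<p. x ^ i) = of_nat p + (\<Sum>i<p. (x ^ i - 1))"
    by (simp add: sum_subtractf)
  finally have e: "x ^ p - 1 = (x - 1) * (of_nat p + (\<Sum>i<p. (x ^ i - 1)))" .
  have "absv (\<Sum>i<p. (x ^ i - 1)) \<le> absv (x - 1)"
    by (rule av_sum_le) (use x1 av_pow_sub1 av_nonneg in auto)
  then have "absv (of_nat p + (\<Sum>i<p. (x ^ i - 1))) \<le> max (1 / real p) (absv (x - 1))"
    using av_ultra[of "of_nat p" "\<Sum>i<p. (x ^ i - 1)"] av_p by simp
  then show ?thesis unfolding e av_mult using av_nonneg[of "x - 1"]
    by (metis mult.commute mult_left_mono)
qed

lemma av_decay:
  assumes "absv (q - 1) < 1"
  shows "absv (q ^ (p ^ N) - 1) \<le> max (1 / real p) (absv (q - 1)) ^ N * absv (q - 1)"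
proof (induction N)
  case 0 then show ?case by simp
next
  case (Suc N)
  let ?c = "max (1 / real p) (absv (q - 1))"
  have c1: "?c \<le> 1" using assms p_inv_lt1 by auto
  have c0: "?c \<ge> 0" by (auto simp: le_max_iff_disj)
  have "?c ^ N * absv (q - 1) \<le> absv (q - 1)"
    using c1 c0 av_nonneg[of "q - 1"] by (simp add: mult_left_le_one_le power_le_one)
  then have lt: "absv (q ^ (p ^ N) - 1) < 1" using Suc assms by linarith
  have e: "q ^ (p ^ Suc N) = (q ^ (p ^ N)) ^ p" by (simp add: power_mult[symmetric] mult.commute)
  have "absv (q ^ (p ^ Suc N) - 1) \<le> max (1 / real p) (absv (q ^ (p ^ N) - 1)) * absv (q ^ (p ^ N) - 1)"
    unfolding e by (rule av_powp[OF lt])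
  also have "\<dots> \<le> ?c * (?c ^ N * absv (q - 1))"
    apply (rule mult_mono)
    using Suc \<open>?c ^ N * absv (q - 1) \<le> absv (q - 1)\<close> av_nonneg c0 by auto
  finally show ?case by (simp add: mult.assoc)
qed

lemma av_two: assumes "odd p" shows "absv 2 = 1"
proof -
  obtain k where k: "p = 2 * k + 1" using assms oddE by blast
  have "(1::'a) = of_nat p + - (2 * of_nat k)" using k by simp
  then have "absv (1::'a) \<le> max (absv (of_nat p)) (absv (2 * of_nat k))"
    using av_ultra[of "of_nat p" "- (2 * of_nat k)"] av_minus by metis
  also have "absv (2 * of_nat k :: 'a) \<le> absv 2" using av_of_nat[of k] av_nonneg[of 2]
    by (simp add: av_mult mult_left_le)
  finally have "1 \<le> max (1 / real p) (absv (2::'a))" using av_one av_p by simp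
  moreover have "1 / real p < 1" by (rule p_inv_lt1)
  ultimately have "absv (2::'a) \<ge> 1" by linarith
  moreover have "absv (2::'a) \<le> 1" using av_of_nat[of 2] by simp
  ultimately show ?thesis by simp
qed


lemma the_eq:
  assumes "\<And>e. e > 0 \<Longrightarrow> \<exists>M. \<forall>N\<ge>M. absv (s N - t N) < e"
  shows "(THE L. conv_abs absv s L) = (THE L. conv_abs absv t L)"
proof -
  have *: "conv_abs absv u L" if c: "conv_abs absv v L"
    and d: "\<And>e. e > 0 \<Longrightarrow> \<exists>M. \<forall>N\<ge>M. absv (u N - v N) < e" for u v L
    unfolding conv_abs_def
  proof (intro allI impI)
    fix e :: real assume e: "e > 0"
    obtain M1 where M1: "\<forall>N\<ge>M1. absv (v N - L) < e" using c e unfolding conv_abs_def by blast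
    obtain M2 where M2: "\<forall>N\<ge>M2. absv (u N - v N) < e" using d e by blast
    show "\<exists>M. \<forall>N\<ge>M. absv (u N - L) < e"
    proof (intro exI allI impI)
      fix N assume "max M1 M2 \<le> N"
      then have "absv (u N - v N) < e" "absv (v N - L) < e" using M1 M2 by auto
      then show "absv (u N - L) < e" using av_tri[of "u N" L "v N"]
        by (meson le_less_trans max_less_iff_conj)
    qed
  qed
  have "conv_abs absv s = conv_abs absv t"
  proof (intro ext iffI)
    fix L assume "conv_abs absv t L" then show "conv_abs absv s L" using * assms by blast
  next
    fix L assume "conv_abs absv s L" then show "conv_abs absv t L"
      using *[of s L t] assms av_sym by (metis (no_types, lifting))
  qed
  then show ?thesis by simp
qed

end



lemma qbr_flip:
  fixes q :: "'a::field"
  assumes q0: "q \<noteq> 0" and q1: "q \<noteq> -1" and P: "odd P"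
  shows "qbr (- inverse q) (int P) = qbr (- q) (int P) / q ^ (P - 1)"
proof -
  obtain m where m: "P = Suc m" using P by (cases P) auto
  have n1: "- inverse q \<noteq> 1" "- q \<noteq> 1"
  proof
    assume "- inverse q = 1"
    then have "inverse q = -1" by (metis minus_equation_iff)
    then have "q = -1" by (metis inverse_minus_eq inverse_1 inverse_inverse_eq)
    then show False using q1 by simp
  next
    show "- q \<noteq> 1" using q1 by (metis minus_equation_iff)
  qed
  have 1: "(- inverse q) ^ P = - (inverse q ^ P)" "(- q) ^ P = - (q ^ P)" using P
    by (simp_all add: power_minus_odd)
  have qq: "1 + q \<noteq> 0" using q1 by (metis add.commute add_eq_0_iff)
  have "qbr (- inverse q) (int P) = (1 + inverse q ^ P) / (1 + inverse q)"
    using n1 1 by (simp add: qbr_def power_int_of_nat)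
  also have "\<dots> = (1 + q ^ P) / (1 + q) / q ^ (P - 1)"
  proof -
    have a: "1 + inverse q ^ P = (q ^ P + 1) / q ^ P" using q0 by (simp add: power_one_over add_divide_distrib inverse_eq_divide)
    have b: "1 + inverse q = (q + 1) / q" using q0 by (simp add: add_divide_distrib inverse_eq_divide)
    have c: "q ^ P = q * q ^ (P - 1)" unfolding m by simp
    show ?thesis unfolding a b c using q0 qq by (simp add: add.commute mult.commute)
  qed
  also have "(1 + q ^ P) / (1 + q) = qbr (- q) (int P)"
    using n1 1 by (simp add: qbr_def power_int_of_nat)
  finally show ?thesis .
qed

lemma sum_flip:
  fixes q :: "'a::field"
  assumes q0: "q \<noteq> 0" and q1: "q \<noteq> -1" and P: "odd P"
  shows "(1 / qbr (- inverse q) (int P)) * (\<Sum>\<xi><P. f \<xi> * (- inverse q) ^ \<xi>)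
       = (1 / qbr (- q) (int P)) * (\<Sum>\<eta><P. f (P - 1 - \<eta>) * (- q) ^ \<eta>)"
proof -
  have h1: "(- inverse q) ^ (P - Suc \<eta>) = (- q) ^ \<eta> / q ^ (P - Suc 0)" if "\<eta> < P" for \<eta>
  proof -
    define d where "d = P - Suc \<eta>"
    have pd: "P - 1 = \<eta> + d" using that d_def by simp
    have "P = Suc (\<eta> + d)" using pd that by simp
    then have ev: "even (\<eta> + d)" using P by simp
    have s: "(-1::'a) ^ d = (-1) ^ \<eta>" using ev by (auto simp: minus_one_power_iff)
    have "(- inverse q) ^ d = (-1) ^ d / q ^ d"
      unfolding power_minus[of "inverse q"] power_inverse divide_inverse ..
    also have "\<dots> = (-1) ^ \<eta> * q ^ \<eta> / q ^ (\<eta> + d)" using q0 s by (simp add: power_add)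
    also have "\<dots> = (- q) ^ \<eta> / q ^ (P - 1)" using pd by (simp add: power_minus')
    finally show ?thesis using d_def by simp
  qed
  have "(\<Sum>\<xi><P. f \<xi> * (- inverse q) ^ \<xi>) = (\<Sum>\<eta><P. f (P - Suc \<eta>) * (- inverse q) ^ (P - Suc \<eta>))"
    by (rule sum.nat_diff_reindex[symmetric])
  also have "\<dots> = (\<Sum>\<eta><P. f (P - 1 - \<eta>) * (- q) ^ \<eta>) / q ^ (P - 1)"
    by (simp add: sum_divide_distrib h1 del: diff_Suc_1)
  finally show ?thesis using qbr_flip[OF q0 q1 P] q0 by simp
qed




context cpf begin

lemma gen_bound:
  assumes w: "absv w = 1" and u: "absv u \<le> 1" and v: "absv v \<le> 1"
  shows "absv (w ^ k * u ^ n - v ^ n) \<le> max (absv (w - 1)) (absv (u - v))"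
proof -
  have X: "absv (w ^ k * u ^ n - v ^ n) \<le> max (absv (w ^ k - 1) * absv (u ^ n)) (absv (u ^ n - v ^ n))"
    using av_prod_diff[of "w ^ k" "u ^ n" 1 "v ^ n"] av_one by simp
  have a: "absv (w ^ k - 1) \<le> absv (w - 1)" using av_pow_sub1 w by simp
  have b: "absv (u ^ n) \<le> 1" using u av_nonneg[of u] by (simp add: av_power power_le_one)
  have t1: "absv (w ^ k - 1) * absv (u ^ n) \<le> absv (w - 1)"
    using mult_right_le_one_le[OF av_nonneg av_nonneg b] a by (rule order_trans)
  have t2: "absv (u ^ n - v ^ n) \<le> absv (u - v)" using av_pow_diff u v by simp
  show ?thesis by (meson X order_trans max.mono t1 t2)
qed

lemma term_bound:
  assumes q1: "absv q = 1" and eta: "\<eta> < P"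
  shows "absv (q ^ ((h - 1) * (\<eta> + 1)) * qbr (inverse q ^ \<alpha>) (1 - int \<eta>) ^ n
           - inverse q ^ ((h - 1) * (P - 1 - \<eta>)) * qbr (inverse q ^ \<alpha>) (2 + int (P - 1 - \<eta>)) ^ n)
         \<le> max 1 (absv (1 / (1 - inverse q ^ \<alpha>)) ^ n) * max (absv (inverse q ^ P - 1)) (absv (of_nat P :: 'a))"
proof -
  define b where "b = inverse q ^ \<alpha>"
  define w where "w = inverse q ^ P"
  define K where "K = max 1 (absv (1 / (1 - b)) ^ n)"
  define k where "k = h - 1"
  define A where "A = q ^ (k * (\<eta> + 1))"
  define y where "y = qbr b (1 - int \<eta>)"
  define z where "z = qbr b (2 + int (P - 1 - \<eta>))"
  have q0: "q \<noteq> 0" using q1 av_zero[of 0] by auto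
  have iq: "absv (inverse q) = 1" using q1 by (simp add: av_inverse)
  have b1: "absv b = 1" unfolding b_def using iq by (simp add: av_power)
  have w1: "absv w = 1" unfolding w_def using iq by (simp add: av_power)
  have A1: "absv A = 1" unfolding A_def using q1 by (simp add: av_power)
  have eA: "inverse q ^ (k * (P - 1 - \<eta>)) = w ^ k * A"
  proof -
    have "P = (P - 1 - \<eta>) + (\<eta> + 1)" using eta by simp
    then have e: "P * k = k * (P - 1 - \<eta>) + k * (\<eta> + 1)" by (metis add_mult_distrib2 mult.commute)
    have "w ^ k * A = inverse q ^ (k * (P - 1 - \<eta>)) * (inverse q ^ (k * (\<eta> + 1)) * q ^ (k * (\<eta> + 1)))"
      unfolding w_def A_def by (simp add: power_mult[symmetric] e power_add mult.assoc)
    also have "inverse q ^ (k * (\<eta> + 1)) * q ^ (k * (\<eta> + 1)) = 1"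
      using q0 by (simp add: power_inverse)
    finally show ?thesis by simp
  qed
  have K1: "K \<ge> 1" unfolding K_def by simp
  have M0: "max (absv (w - 1)) (absv (of_nat P :: 'a)) \<ge> 0" using av_nonneg[of "w - 1"] by simp
  have main: "absv (w ^ k * z ^ n - y ^ n) \<le> K * max (absv (w - 1)) (absv (of_nat P :: 'a))"
  proof (cases "b = 1")
    case True
    then have yz: "y = of_int (1 - int \<eta>)" "z = of_int (2 + int (P - 1 - \<eta>))"
      unfolding y_def z_def qbr_def by simp_all
    have "z - y = of_nat P" unfolding yz using eta by (simp add: of_nat_diff)
    then have "absv (w ^ k * z ^ n - y ^ n) \<le> max (absv (w - 1)) (absv (of_nat P :: 'a))"
    proof -
      have zb: "absv z \<le> 1" "absv y \<le> 1" unfolding yz by (rule av_of_int)+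
      show ?thesis using gen_bound[OF w1 zb, of k n] \<open>z - y = of_nat P\<close> by simp
    qed
    also have "\<dots> \<le> K * max (absv (w - 1)) (absv (of_nat P :: 'a))"
      using mult_right_mono[OF K1 M0] by simp
    finally show ?thesis .
  next
    case False
    define c where "c = b powi (1 - int \<eta>)"
    define D where "D = 1 / (1 - b)"
    have c1: "absv c = 1" unfolding c_def using b1 by (rule av_powi1)
    have b0: "b \<noteq> 0" using b1 av_zero[of 0] by auto
    have e2: "(2::int) + int (P - 1 - \<eta>) = int P + (1 - int \<eta>)" using eta by presburger
    have "b powi (2 + int (P - 1 - \<eta>)) = b powi (int P + (1 - int \<eta>))"
      by (simp only: e2)
    also have "\<dots> = b ^ P * c" unfolding c_def using b0 by (simp add: power_int_add power_int_of_nat)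
    also have "b ^ P = w ^ \<alpha>" unfolding b_def w_def by (simp add: power_mult[symmetric] mult.commute)
    finally have bz: "b powi (2 + int (P - 1 - \<eta>)) = w ^ \<alpha> * c" .
    have yz1: "y = D * (1 - c)" unfolding y_def qbr_def D_def c_def using False by simp
    have yz2: "z = D * (1 - w ^ \<alpha> * c)" unfolding z_def qbr_def D_def using False bz by simp
    note yz = yz1 yz2
    have u: "absv (1 - w ^ \<alpha> * c) \<le> 1"
      using av_ultra_diff[of 1 "w ^ \<alpha> * c"] av_one c1 w1 by (simp add: av_mult av_power)
    have v: "absv (1 - c) \<le> 1" using av_ultra_diff[of 1 c] av_one c1 by simp
    have uv: "absv ((1 - w ^ \<alpha> * c) - (1 - c)) \<le> absv (w - 1)"
    proof -
      have "(1 - w ^ \<alpha> * c) - (1 - c) = - (c * (w ^ \<alpha> - 1))" by (simp add: algebra_simps)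
      then show ?thesis using c1 av_pow_sub1[of w \<alpha>] w1 by (simp add: av_minus av_mult)
    qed
    have "w ^ k * z ^ n - y ^ n = D ^ n * (w ^ k * (1 - w ^ \<alpha> * c) ^ n - (1 - c) ^ n)"
      unfolding yz power_mult_distrib by (simp add: algebra_simps)
    then have "absv (w ^ k * z ^ n - y ^ n) = absv D ^ n * absv (w ^ k * (1 - w ^ \<alpha> * c) ^ n - (1 - c) ^ n)"
      by (simp add: av_mult av_power)
    also have "\<dots> \<le> absv D ^ n * absv (w - 1)"
      apply (rule mult_left_mono)
      using gen_bound[OF w1 u v, of k n] uv av_nonneg[of D] by auto
    also have "\<dots> \<le> K * max (absv (w - 1)) (absv (of_nat P :: 'a))"
      apply (rule mult_mono)
      unfolding K_def D_def using av_nonneg[of "w - 1"] by auto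
    finally show ?thesis .
  qed
  have "q ^ ((h - 1) * (\<eta> + 1)) * qbr (inverse q ^ \<alpha>) (1 - int \<eta>) ^ n
           - inverse q ^ ((h - 1) * (P - 1 - \<eta>)) * qbr (inverse q ^ \<alpha>) (2 + int (P - 1 - \<eta>)) ^ n
        = - (A * (w ^ k * z ^ n - y ^ n))"
    unfolding eA[unfolded k_def] A_def k_def y_def z_def b_def by (simp add: algebra_simps)
  then show ?thesis using main A1 unfolding K_def b_def w_def by (simp add: av_minus av_mult)
qed

end



context cpf begin

lemma R_bound:
  assumes q: "absv (q - 1) < 1" and P: "odd P" and qP: "absv (q ^ P - 1) < 1" and op: "odd p"
  shows "absv (1 / qbr (- q) (int P)) \<le> 1"
proof -
  have q1: "absv q = 1" using av_near1 q by simp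
  have a2: "absv (2::'a) = 1" using av_two op by simp
  have n1: "- q \<noteq> 1"
  proof
    assume "- q = 1" then have "q = - 1" by (metis minus_equation_iff)
    then have "absv (q - 1) = absv (- 2 :: 'a)" by simp
    then show False using q a2 av_minus[of "2::'a"] by linarith
  qed
  have "qbr (- q) (int P) = (1 + q ^ P) / (1 + q)"
    using n1 P by (simp add: qbr_def power_int_of_nat power_minus_odd)
  then have e: "1 / qbr (- q) (int P) = (1 + q) / (1 + q ^ P)" by simp
  have "1 + q ^ P = 2 + (q ^ P - 1)" by simp
  then have d: "absv (1 + q ^ P) = 1" using av_strict[of "q ^ P - 1" 2] a2 qP by simp
  have "absv (1 + q) \<le> 1" using av_ultra[of 1 q] av_one q1 by simp
  then show ?thesis unfolding e av_divide d by simp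
qed

lemma sum_diff_bound:
  assumes q: "absv (q - 1) < 1" and op: "odd p"
  shows "absv ((1 / qbr (- q) (int (p ^ N))) *
            (\<Sum>\<xi><p ^ N. q ^ ((h - 1) * (\<xi> + 1)) * qbr (inverse q ^ \<alpha>) (1 - int \<xi>) ^ n * (- q) ^ \<xi>)
          - (1 / qbr (- inverse q) (int (p ^ N))) *
            (\<Sum>\<xi><p ^ N. inverse q ^ ((h - 1) * \<xi>) * qbr (inverse q ^ \<alpha>) (2 + int \<xi>) ^ n * (- inverse q) ^ \<xi>))
         \<le> max 1 (absv (1 / (1 - inverse q ^ \<alpha>)) ^ n) * max (1 / real p) (absv (q - 1)) ^ N"
proof -
  define P where "P = p ^ N"
  define K where "K = max 1 (absv (1 / (1 - inverse q ^ \<alpha>)) ^ n)"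
  define c where "c = max (1 / real p) (absv (q - 1))"
  define g where "g = (\<lambda>\<xi>. q ^ ((h - 1) * (\<xi> + 1)) * qbr (inverse q ^ \<alpha>) (1 - int \<xi>) ^ n)"
  define f where "f = (\<lambda>\<xi>. inverse q ^ ((h - 1) * \<xi>) * qbr (inverse q ^ \<alpha>) (2 + int \<xi>) ^ n)"
  define R where "R = qbr (- q) (int P)"
  have q1: "absv q = 1" using av_near1 q by simp
  have q0: "q \<noteq> 0" using q1 av_zero[of 0] by auto
  have a2: "absv (2::'a) = 1" using av_two op by simp
  have qm1: "q \<noteq> -1"
  proof
    assume "q = -1"
    then have "absv (q - 1) = absv (- 2 :: 'a)" by simp
    then show False using q a2 av_minus[of "2::'a"] by linarith
  qed
  have oP: "odd P" unfolding P_def using op by simp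
  have c0: "c \<ge> 0" unfolding c_def by (auto simp: le_max_iff_disj)
  have c1: "c \<le> 1" unfolding c_def using q p_inv_lt1 by auto
  have K1: "K \<ge> 1" unfolding K_def by simp
  have dec: "absv (q ^ P - 1) \<le> c ^ N * absv (q - 1)" unfolding P_def c_def by (rule av_decay[OF q])
  have "c ^ N * absv (q - 1) \<le> c ^ N * 1" using q c0 by (intro mult_left_mono) auto
  then have dec2: "absv (q ^ P - 1) \<le> c ^ N" using dec by simp
  have "c ^ N * absv (q - 1) \<le> absv (q - 1)"
    using c0 c1 av_nonneg[of "q - 1"] by (simp add: mult_left_le_one_le power_le_one)
  then have qP: "absv (q ^ P - 1) < 1" using dec q by linarith
  have wq: "absv (inverse q ^ P - 1) = absv (q ^ P - 1)"
  proof -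
    have qP0: "q ^ P \<noteq> 0" using q0 by simp
    have "inverse q ^ P - 1 = - ((q ^ P - 1) * inverse (q ^ P))" using qP0
      by (simp add: power_inverse algebra_simps)
    then show ?thesis using q1 by (simp add: av_minus av_mult av_inverse av_power)
  qed
  have aP: "absv (of_nat P :: 'a) \<le> c ^ N"
  proof -
    have "absv (of_nat P :: 'a) = (1 / real p) ^ N" unfolding P_def of_nat_power av_power av_p ..
    also have "\<dots> \<le> c ^ N" unfolding c_def by (intro power_mono) auto
    finally show ?thesis .
  qed
  have mx: "max (absv (inverse q ^ P - 1)) (absv (of_nat P :: 'a)) \<le> c ^ N"
    using wq dec2 aP by simp
  have tb: "absv ((g \<eta> - f (P - 1 - \<eta>)) * (- q) ^ \<eta>) \<le> K * c ^ N" if "\<eta> \<in> {..<P}" for \<eta>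
  proof -
    have "absv ((g \<eta> - f (P - 1 - \<eta>)) * (- q) ^ \<eta>) = absv (g \<eta> - f (P - 1 - \<eta>))"
      using q1 by (simp add: av_mult av_power av_minus)
    also have "\<dots> \<le> K * max (absv (inverse q ^ P - 1)) (absv (of_nat P :: 'a))"
      unfolding g_def f_def K_def using term_bound[OF q1, of \<eta> P h \<alpha> n] that by simp
    also have "\<dots> \<le> K * c ^ N" using mx K1 by (intro mult_left_mono) auto
    finally show ?thesis .
  qed
  have S2: "(1 / qbr (- inverse q) (int P)) * (\<Sum>\<xi><P. f \<xi> * (- inverse q) ^ \<xi>)
          = (1 / R) * (\<Sum>\<eta><P. f (P - 1 - \<eta>) * (- q) ^ \<eta>)"
    unfolding R_def by (rule sum_flip[OF q0 qm1 oP])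
  define A where "A = (\<Sum>\<xi><P. g \<xi> * (- q) ^ \<xi>)"
  define B where "B = (\<Sum>\<eta><P. f (P - 1 - \<eta>) * (- q) ^ \<eta>)"
  define X where "X = (\<Sum>\<eta><P. (g \<eta> - f (P - 1 - \<eta>)) * (- q) ^ \<eta>)"
  have AB: "X = A - B" unfolding A_def B_def X_def sum_subtractf[symmetric] left_diff_distrib ..
  have X: "absv X \<le> K * c ^ N" unfolding X_def
    by (rule av_sum_le) (use tb K1 c0 in auto)
  have R1: "absv (1 / R) \<le> 1" unfolding R_def by (rule R_bound[OF q oP qP op])
  have "(1 / R) * A - (1 / R) * B = (1 / R) * X" unfolding AB by (simp only: right_diff_distrib)
  then have "absv ((1 / R) * A - (1 / R) * B) = absv (1 / R) * absv X" by (simp only: av_mult)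
  also have "\<dots> \<le> 1 * (K * c ^ N)" by (rule mult_mono[OF R1 X]) (use av_nonneg in auto)
  finally have "absv ((1 / R) * A - (1 / R) * B) \<le> K * c ^ N" by simp
  then have "absv ((1 / R) * (\<Sum>\<xi><P. g \<xi> * (- q) ^ \<xi>) - (1 / R) * (\<Sum>\<eta><P. f (P - 1 - \<eta>) * (- q) ^ \<eta>))
      \<le> K * c ^ N" unfolding A_def B_def .
  then show ?thesis using S2 unfolding K_def c_def g_def f_def R_def P_def by (simp add: mult.assoc)
qed

end



theorem mainTheorem4:
  fixes absv :: "'a::field_char_0 \<Rightarrow> real" and p :: nat and q :: 'a
    and \<alpha> h n :: nat
  assumes "prime p" and "odd p" and "Cp_field absv p"
    and "absv (q - 1) < 1" and "h \<ge> 1"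
  shows "fermionic_qint absv p q
           (\<lambda>\<xi>. q ^ ((h - 1) * (\<xi> + 1)) * qbr (inverse q ^ \<alpha>) (1 - int \<xi>) ^ n)
         = Gtilde absv p (inverse q) \<alpha> h (n + 1) 2 / of_nat (n + 1)"
proof -
  interpret cpf absv p using assms(1,3) by unfold_locales
  define K where "K = max 1 (absv (1 / (1 - inverse q ^ \<alpha>)) ^ n)"
  define c where "c = max (1 / real p) (absv (q - 1))"
  have c0: "c > 0" unfolding c_def using p_gt1 by (auto simp: less_max_iff_disj)
  have c1: "c < 1" unfolding c_def using assms(4) p_inv_lt1 by auto
  have K0: "K > 0" unfolding K_def by (auto simp: less_max_iff_disj)
  have RHS: "Gtilde absv p (inverse q) \<alpha> h (n + 1) 2 / of_nat (n + 1)
      = fermionic_qint absv p (inverse q) (\<lambda>\<xi>. inverse q ^ ((h - 1) * \<xi>) * qbr (inverse q ^ \<alpha>) (2 + int \<xi>) ^ n)"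
  proof -
    have nz: "(1 + of_nat n :: 'a) \<noteq> 0" using of_nat_neq_0[of n] by simp
    then show ?thesis unfolding Gtilde_def by simp
  qed
  show ?thesis unfolding RHS fermionic_qint_def
  proof (rule the_eq)
    fix e :: real assume e: "e > 0"
    obtain M where M: "c ^ M < e / K" using real_arch_pow_inv[of "e / K" c] e K0 c1 by auto
    show "\<exists>M. \<forall>N\<ge>M. absv (1 / qbr (- q) (int (p ^ N)) *
              (\<Sum>\<xi><p ^ N. q ^ ((h - 1) * (\<xi> + 1)) * qbr (inverse q ^ \<alpha>) (1 - int \<xi>) ^ n * (- q) ^ \<xi>) -
             1 / qbr (- inverse q) (int (p ^ N)) *
              (\<Sum>\<xi><p ^ N. inverse q ^ ((h - 1) * \<xi>) * qbr (inverse q ^ \<alpha>) (2 + int \<xi>) ^ n * (- inverse q) ^ \<xi>)) < e"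
    proof (intro exI allI impI)
      fix N assume N: "M \<le> N"
      have "c ^ N \<le> c ^ M" using N c0 c1 by (intro power_decreasing) auto
      then have "K * c ^ N \<le> K * c ^ M" using K0 by simp
      moreover have "K * c ^ M < e" using M K0 by (simp add: field_simps)
      ultimately have "K * c ^ N < e" by linarith
      then show "absv (1 / qbr (- q) (int (p ^ N)) *
              (\<Sum>\<xi><p ^ N. q ^ ((h - 1) * (\<xi> + 1)) * qbr (inverse q ^ \<alpha>) (1 - int \<xi>) ^ n * (- q) ^ \<xi>) -
             1 / qbr (- inverse q) (int (p ^ N)) *
              (\<Sum>\<xi><p ^ N. inverse q ^ ((h - 1) * \<xi>) * qbr (inverse q ^ \<alpha>) (2 + int \<xi>) ^ n * (- inverse q) ^ \<xi>)) < e"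
        using sum_diff_bound[OF assms(4) assms(2), of N h \<alpha> n] unfolding K_def c_def by linarith
    qed
  qed
qed


end
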